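(* No deterministic online scheduler for the serial-parallel scheduling problem on $p$ processors has awake-time competitive ratio smaller than $\phi-1/p$, where $\phi=(1+\sqrt5)/2$ is the golden ratio: for every such scheduler there is a task arrival process on which its awake time is at least $(\phi-1/p)$ times the optimal offline awake time.
   Context: Serial-parallel scheduling problem: $p$ identical processors. A task arrival process is a finite set of tasks $\tau_i=(\sigma_i,\pi_i,t_i)$ with arrival time $t_i\ge0$, serial work $\sigma_i$ and parallel work $\pi_i$, $1\le\pi_i/\sigma_i\le p$. A task is performed either by its serial job (work $\sigma_i$, at most one processor at any instant) or by its parallel job (work $\pi_i$, any number of processors, rate equal to number of processors); time is continuous, allocations may be fractional via time sharing, preemption is allowed, and the choice of implementation is irrevocable once the task is started (the scheduler may delay starting a task). A task is alive from arrival until completion; awake time is the measure of the set of times at which some task is alive. An online scheduler learns about a task only at its arrival; the optimal offline schedule knows everything in advance. *)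

theory Defs
  imports "HOL-Analysis.Analysis"
begin

type_synonym task = "real \<times> real \<times> real"

definition ser :: "task \<Rightarrow> real" where "ser x = fst x"
definition par_work :: "task \<Rightarrow> real" where "par_work x = fst (snd x)"
definition arr :: "task \<Rightarrow> real" where "arr x = snd (snd x)"

definition valid_task :: "nat \<Rightarrow> task \<Rightarrow> bool" where
  "valid_task p x \<longleftrightarrow> 0 < ser x \<and> ser x \<le> par_work x \<and> par_work x \<le> real p * ser x \<and> 0 \<le> arr x"

definition instance_ok :: "nat \<Rightarrow> task list \<Rightarrow> bool" where
  "instance_ok p I \<longleftrightarrow> (\<forall>x\<in>set I. valid_task p x) \<and> sorted (map arr I)"

text \<open>A schedule: for each task index, the implementation choice (True = parallel job,
  False = serial job) and the processing rate (number of processors, possibly fractional)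
  assigned to it at each time.\<close>
type_synonym schedule = "(nat \<Rightarrow> bool) \<times> (nat \<Rightarrow> real \<Rightarrow> real)"

definition work :: "task list \<Rightarrow> (nat \<Rightarrow> bool) \<Rightarrow> nat \<Rightarrow> real" where
  "work I c i = (if c i then par_work (I ! i) else ser (I ! i))"

definition valid_schedule :: "nat \<Rightarrow> task list \<Rightarrow> schedule \<Rightarrow> bool" where
  "valid_schedule p I S \<longleftrightarrow>
     (\<forall>i < length I.
        snd S i \<in> borel_measurable borel
      \<and> (\<forall>s. 0 \<le> snd S i s)
      \<and> (\<forall>s. s < arr (I ! i) \<longrightarrow> snd S i s = 0)
      \<and> (\<not> fst S i \<longrightarrow> (\<forall>s. snd S i s \<le> 1))
      \<and> (\<exists>T. work I (fst S) i \<le> integral {arr (I ! i)..T} (snd S i)))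
   \<and> (\<forall>s. (\<Sum>i<length I. snd S i s) \<le> real p)"

definition completion :: "task list \<Rightarrow> schedule \<Rightarrow> nat \<Rightarrow> real" where
  "completion I S i =
     Inf {T. arr (I ! i) \<le> T \<and> work I (fst S) i \<le> integral {arr (I ! i)..T} (snd S i)}"

definition awake :: "task list \<Rightarrow> schedule \<Rightarrow> real" where
  "awake I S = measure lborel (\<Union>i<length I. {arr (I ! i)..<completion I S i})"

definition opt_awake :: "nat \<Rightarrow> task list \<Rightarrow> real" where
  "opt_awake p I = Inf (awake I ` {S. valid_schedule p I S})"

text \<open>A deterministic online scheduler: maps every arrival process to a valid schedule,
  such that what it does up to time t (rates, and the implementation choice of
  every task already started) depends only on the tasks arrived by time t.\<close>
definition online_scheduler :: "nat \<Rightarrow> (task list \<Rightarrow> schedule) \<Rightarrow> bool" where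
  "online_scheduler p A \<longleftrightarrow>
     (\<forall>I. instance_ok p I \<longrightarrow> valid_schedule p I (A I))
   \<and> (\<forall>I I' t. instance_ok p I \<longrightarrow> instance_ok p I' \<longrightarrow>
        takeWhile (\<lambda>x. arr x \<le> t) I = takeWhile (\<lambda>x. arr x \<le> t) I' \<longrightarrow>
        (\<forall>i < length (takeWhile (\<lambda>x. arr x \<le> t) I).
           (AE s in lborel. s \<le> t \<longrightarrow> snd (A I) i s = snd (A I') i s)
         \<and> (0 < integral {arr (I ! i)..t} (snd (A I) i) \<longrightarrow> fst (A I) i = fst (A I') i)))"

end

theory Submission
  imports Defs
begin
lemma bint: fixes g :: "real \<Rightarrow> real"
  assumes "g \<in> borel_measurable borel" "\<And>s. 0 \<le> g s" "\<And>s. g s \<le> c"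
  shows "g integrable_on {u..v}"
proof (rule measurable_bounded_by_integrable_imp_integrable_real[where g="\<lambda>_. c"])
  have "g \<in> borel_measurable lebesgue"
    using measurable_completion[of g lborel borel] assms(1) by simp
  then show "g \<in> borel_measurable (lebesgue_on {u..v})"
    by (rule measurable_restrict_space1)
  show "(\<lambda>_. c) integrable_on {u..v}" by (rule integrable_const_ivl)
  show "\<bar>g x\<bar> \<le> c" if "x \<in> {u..v}" for x using assms(2)[of x] assms(3)[of x] by auto
  show "{u..v} \<in> sets lebesgue" by simp
qed

lemma rate_props:
  assumes "valid_schedule p I S" "i < length I"
  shows "snd S i \<in> borel_measurable borel" "0 \<le> snd S i s" "snd S i s \<le> real p"
    "s < arr (I!i) \<Longrightarrow> snd S i s = 0"
    "\<not> fst S i \<Longrightarrow> snd S i s \<le> 1"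
    "\<exists>T. work I (fst S) i \<le> integral {arr (I ! i)..T} (snd S i)"
proof -
  show "snd S i \<in> borel_measurable borel" "0 \<le> snd S i s"
    "s < arr (I!i) \<Longrightarrow> snd S i s = 0"
    "\<not> fst S i \<Longrightarrow> snd S i s \<le> 1"
    "\<exists>T. work I (fst S) i \<le> integral {arr (I ! i)..T} (snd S i)"
    using assms unfolding valid_schedule_def by auto
  have "snd S i s \<le> (\<Sum>j<length I. snd S j s)"
    by (rule member_le_sum) (use assms in \<open>auto simp: valid_schedule_def\<close>)
  also have "\<dots> \<le> real p" using assms(1) unfolding valid_schedule_def by auto
  finally show "snd S i s \<le> real p" .
qed

lemma rate_int:
  assumes "valid_schedule p I S" "i < length I"
  shows "snd S i integrable_on {u..v}"
  using bint rate_props[OF assms] by metis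

lemma int_le_const:
  fixes f :: "real \<Rightarrow> real"
  assumes "f integrable_on {u..v}" "\<And>s. f s \<le> c" "u \<le> v"
  shows "integral {u..v} f \<le> c * (v - u)"
proof -
  have "integral {u..v} f \<le> integral {u..v} (\<lambda>_. c)"
    by (rule integral_le) (use assms in auto)
  also have "\<dots> = c * (v - u)" using assms(3) by (simp add: content_real)
  finally show ?thesis .
qed

lemma int_nonneg:
  fixes f :: "real \<Rightarrow> real"
  assumes "f integrable_on {u..v}" "\<And>s. 0 \<le> f s"
  shows "0 \<le> integral {u..v} f"
  using assms by (simp add: integral_nonneg)

lemma int_mono:
  fixes f :: "real \<Rightarrow> real"
  assumes "\<And>u v. f integrable_on {u..v}" "\<And>s. 0 \<le> f s" "u' \<le> u" "v \<le> v'"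
  shows "integral {u..v} f \<le> integral {u'..v'} f"
  by (rule integral_subset_le) (use assms in auto)

lemma int_split:
  fixes f :: "real \<Rightarrow> real"
  assumes "\<And>u v. f integrable_on {u..v}" "a \<le> c" "c \<le> b"
  shows "integral {a..b} f = integral {a..c} f + integral {c..b} f"
  using Henstock_Kurzweil_Integration.integral_combine[OF assms(2,3) assms(1)] by simp

lemma work_pos:
  assumes "instance_ok p I" "i < length I"
  shows "0 < work I c i"
proof -
  have "valid_task p (I!i)" using assms unfolding instance_ok_def by auto
  then show ?thesis unfolding work_def valid_task_def by auto
qed

lemma compl_ne:
  assumes "instance_ok p I" "valid_schedule p I S" "i < length I"
  shows "\<exists>T. arr (I!i) \<le> T \<and> work I (fst S) i \<le> integral {arr (I ! i)..T} (snd S i)"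
proof -
  obtain T where T: "work I (fst S) i \<le> integral {arr (I ! i)..T} (snd S i)"
    using rate_props(6)[OF assms(2,3)] by blast
  have "arr (I!i) \<le> T"
  proof (rule ccontr)
    assume "\<not> arr (I!i) \<le> T"
    then have "{arr (I!i)..T} = {}" by auto
    then show False using T work_pos[OF assms(1,3), of "fst S"] by simp
  qed
  then show ?thesis using T by blast
qed

lemma compl_ge:
  assumes "instance_ok p I" "valid_schedule p I S" "i < length I"
    "\<And>T. arr (I!i) \<le> T \<Longrightarrow> work I (fst S) i \<le> integral {arr (I ! i)..T} (snd S i) \<Longrightarrow> B \<le> T"
  shows "B \<le> completion I S i"
  unfolding completion_def
  by (rule cInf_greatest) (use compl_ne[OF assms(1-3)] assms(4) in auto)

lemma compl_lt:
  assumes "instance_ok p I" "valid_schedule p I S" "i < length I" "completion I S i < B"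
  shows "\<exists>T. arr (I!i) \<le> T \<and> T < B \<and> work I (fst S) i \<le> integral {arr (I ! i)..T} (snd S i)"
proof -
  have ne: "{T. arr (I ! i) \<le> T \<and> work I (fst S) i \<le> integral {arr (I ! i)..T} (snd S i)} \<noteq> {}"
    using compl_ne[OF assms(1-3)] by auto
  from cInf_lessD[OF ne assms(4)[unfolded completion_def]] show ?thesis by auto
qed

lemma compl_le:
  assumes "arr (I!i) \<le> T" "work I (fst S) i \<le> integral {arr (I ! i)..T} (snd S i)"
  shows "completion I S i \<le> T"
  unfolding completion_def
  by (rule cInf_lower) (use assms in \<open>auto intro: bdd_belowI[where m="arr (I!i)"]\<close>)

lemma compl_ge_arr:
  assumes "instance_ok p I" "valid_schedule p I S" "i < length I"
  shows "arr (I!i) \<le> completion I S i"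
  by (rule compl_ge[OF assms]) auto

lemma measure_union_ge:
  fixes l c :: "nat \<Rightarrow> real"
  assumes "{u..<v} \<subseteq> (\<Union>i<n. {l i..<c i})" "u \<le> v"
  shows "v - u \<le> measure lborel (\<Union>i<n. {l i..<c i})"
proof -
  define b where "b = (\<Sum>i<n. \<bar>l i\<bar> + \<bar>c i\<bar>)"
  have sub: "{l i..<c i} \<subseteq> {-b..b}" if "i < n" for i
  proof -
    have "\<bar>l i\<bar> + \<bar>c i\<bar> \<le> b" unfolding b_def
      by (rule member_le_sum[where f="\<lambda>i. \<bar>l i\<bar> + \<bar>c i\<bar>"]) (use that in auto)
    then show ?thesis by auto
  qed
  have fm: "{-b..b} \<in> fmeasurable lborel"
    using fmeasurable_cbox[of "-b" b] by (simp add: cbox_interval)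
  have "(\<Union>i<n. {l i..<c i}) \<in> fmeasurable lborel"
    by (rule fmeasurable_UN[OF _ sub _ fm]) auto
  then have "measure lborel {u..<v} \<le> measure lborel (\<Union>i<n. {l i..<c i})"
    by (intro measure_mono_fmeasurable assms(1)) auto
  then show ?thesis using assms(2) by simp
qed

lemma measure_union_le:
  fixes l c :: "nat \<Rightarrow> real"
  assumes "\<And>i. i < n \<Longrightarrow> B0 \<le> l i" "\<And>i. i < n \<Longrightarrow> c i \<le> B1" "B0 \<le> B1"
  shows "measure lborel (\<Union>i<n. {l i..<c i}) \<le> B1 - B0"
proof -
  have fm: "{B0..B1} \<in> fmeasurable lborel"
    using fmeasurable_cbox[of B0 B1] by (simp add: cbox_interval)
  have "measure lborel (\<Union>i<n. {l i..<c i}) \<le> measure lborel {B0..B1}"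
    by (intro measure_mono_fmeasurable fm) (use assms in force)+
  then show ?thesis using assms(3) by simp
qed

lemma awake_ge:
  assumes "{u..<v} \<subseteq> (\<Union>i<length I. {arr (I ! i)..<completion I S i})" "u \<le> v"
  shows "v - u \<le> awake I S"
  unfolding awake_def by (rule measure_union_ge[OF assms])

lemma awake_le:
  assumes "\<And>i. i < length I \<Longrightarrow> B0 \<le> arr (I!i)" "\<And>i. i < length I \<Longrightarrow> completion I S i \<le> B1" "B0 \<le> B1"
  shows "awake I S \<le> B1 - B0"
  unfolding awake_def by (rule measure_union_le[OF assms])

lemma opt_le:
  assumes "valid_schedule p I S"
  shows "opt_awake p I \<le> awake I S"
  unfolding opt_awake_def
  by (rule cInf_lower) (use assms in \<open>auto intro!: bdd_belowI[where m=0] simp: awake_def\<close>)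

lemma opt_nonneg:
  assumes "valid_schedule p I S"
  shows "0 \<le> opt_awake p I"
  unfolding opt_awake_def
proof (rule cInf_greatest)
  show "awake I ` {S. valid_schedule p I S} \<noteq> {}" using assms by blast
qed (auto simp: awake_def)

lemma nth_I1:
  assumes "0 < i" "i < Suc n"
  shows "(T1 # replicate n T2) ! i = T2"
  using assms by (cases i) auto

theorem proposition8p1:
  fixes p :: nat and A :: "task list \<Rightarrow> schedule"
  assumes "1 \<le> p" and "online_scheduler p A"
  shows "\<exists>I. instance_ok p I \<and> I \<noteq> [] \<and>
           awake I (A I) \<ge> ((1 + sqrt 5) / 2 - 1 / real p) * opt_awake p I"
proof -
  define \<phi> where "\<phi> = (1 + sqrt 5) / 2"
  define P where "P = real p"
  define r where "r = \<phi> - 1 / P"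
  have val: "\<And>I. instance_ok p I \<Longrightarrow> valid_schedule p I (A I)"
    using assms(2) unfolding online_scheduler_def by blast
  have onl: "\<And>I I' t. instance_ok p I \<Longrightarrow> instance_ok p I' \<Longrightarrow>
        takeWhile (\<lambda>x. arr x \<le> t) I = takeWhile (\<lambda>x. arr x \<le> t) I' \<Longrightarrow>
        (\<forall>i < length (takeWhile (\<lambda>x. arr x \<le> t) I).
           (AE s in lborel. s \<le> t \<longrightarrow> snd (A I) i s = snd (A I') i s)
         \<and> (0 < integral {arr (I ! i)..t} (snd (A I) i) \<longrightarrow> fst (A I) i = fst (A I') i))"
    using assms(2) unfolding online_scheduler_def by blast
  have s5: "sqrt 5 * sqrt 5 = 5" by simp
  have s5a: "2.2 < sqrt 5" by (rule real_less_rsqrt) (simp add: power2_eq_square)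
  have s5b: "sqrt 5 < 2.25"
  proof (rule ccontr)
    assume "\<not> sqrt 5 < 2.25"
    then have "2.25 * 2.25 \<le> sqrt 5 * sqrt 5" by (intro mult_mono) auto
    then show False by simp
  qed
  have phi2: "\<phi> * \<phi> = \<phi> + 1" unfolding \<phi>_def using s5 by (simp add: field_simps)
  have phia: "1.6 < \<phi>" "\<phi> < 1.625" unfolding \<phi>_def using s5a s5b by auto
  have goal: "\<exists>I. instance_ok p I \<and> I \<noteq> [] \<and> r * opt_awake p I \<le> awake I (A I)"
  proof (cases "p = 1")
    case True
    define I where "I = [(1::real, 1::real, 0::real)]"
    have ok: "instance_ok p I"
      unfolding I_def instance_ok_def valid_task_def ser_def par_work_def arr_def using True by simp
    have v: "valid_schedule p I (A I)" by (rule val[OF ok])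
    have "r \<le> 1" unfolding r_def P_def using True phia by simp
    have o0: "0 \<le> opt_awake p I" by (rule opt_nonneg[OF v])
    have "r * opt_awake p I \<le> 1 * opt_awake p I"
      by (rule mult_right_mono) (use \<open>r \<le> 1\<close> o0 in auto)
    also have "\<dots> \<le> awake I (A I)" using opt_le[OF v] by simp
    finally show ?thesis using ok unfolding I_def by blast
  next
    case False
    then have p2: "2 \<le> p" using assms(1) by linarith
    have P2: "2 \<le> P" unfolding P_def using p2 by simp
    have Pinv: "1 / P \<le> 1/2" using P2 by (simp add: field_simps)
    have Ppos: "0 < 1 / P" using P2 by simp
    have r1: "1 < r" "r < \<phi>" unfolding r_def using phia(1) Pinv Ppos by linarith+
    have "(\<phi> - 1) * r = 1 - (\<phi> - 1) / P"
      unfolding r_def using phi2 P2 by (simp add: field_simps)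
    moreover have "0 < (\<phi> - 1) / P" using phia P2 by simp
    ultimately have "(\<phi> - 1) * r < 1" by linarith
    then have phir: "\<phi> - 1 < 1 / r" using r1 by (simp add: field_simps)
    have rinv1: "1 / r < 1" using r1 by simp
    define y where "y = ((\<phi> - 1) + 1 / r) / 2"
    have y1: "\<phi> - 1 < y" "y < 1 / r" unfolding y_def using phir by auto
    have yl1: "y < 1" using y1 rinv1 by linarith
    have ypos: "0.6 < y" using y1 phia by linarith
    have ry: "r * y \<le> 1" using y1(2) r1 by (simp add: field_simps)
    define \<delta> where "\<delta> = y - (\<phi> - 1)"
    have dpos: "0 < \<delta>" "\<delta> < y" unfolding \<delta>_def using y1 phia by auto
    have ry1: "(r - 1) * y < 1"
    proof -
      have "(r - 1) * y \<le> 1 * y" by (rule mult_right_mono) (use r1 phia ypos in auto)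
      then show ?thesis using yl1 by simp
    qed
    define \<eta> where "\<eta> = min \<delta> (1 - (r - 1) * y) / 2"
    have eta: "0 < \<eta>" "\<eta> < \<delta>" "(r - 1) * y + \<eta> < 1"
    proof -
      have h1: "\<eta> \<le> \<delta> / 2" "\<eta> \<le> (1 - (r - 1) * y) / 2" "0 < \<eta>"
        unfolding \<eta>_def using dpos ry1 by (auto simp: min_def)
      show "0 < \<eta>" by (rule h1(3))
      show "\<eta> < \<delta>" using h1(1) dpos(1) by linarith
      show "(r - 1) * y + \<eta> < 1" using h1(2) ry1 by (simp add: field_simps)

    qed
    define x where "x = P * y"
    have x1: "1 \<le> x"
    proof -
      have "2 * 0.6 \<le> P * y" by (rule mult_mono) (use P2 ypos in auto)
      then show ?thesis unfolding x_def by simp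
    qed
    have xP: "x \<le> P * 1" unfolding x_def by (rule mult_left_mono) (use yl1 P2 in auto)
    define T1 where "T1 = (1::real, x, 0::real)"
    have T1s: "arr T1 = 0" "ser T1 = 1" "par_work T1 = x"
      unfolding T1_def arr_def ser_def par_work_def by simp_all
    define I0 where "I0 = [T1]"
    have vt1: "valid_task p T1" unfolding valid_task_def T1s using x1 xP P_def by simp
    have ok0: "instance_ok p I0" unfolding instance_ok_def I0_def using vt1 by simp
    define S0 where "S0 = A I0"
    have v0: "valid_schedule p I0 S0" unfolding S0_def by (rule val[OF ok0])
    define f where "f = snd S0 0"
    have I00: "I0 ! 0 = T1" "length I0 = 1" unfolding I0_def by simp_all
    have fint: "\<And>u v. f integrable_on {u..v}" unfolding f_def by (rule rate_int[OF v0]) (simp add: I00)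
    have fnn: "\<And>s. 0 \<le> f s" unfolding f_def by (rule rate_props(2)[OF v0]) (simp add: I00)
    have fle: "\<And>s. f s \<le> P" unfolding f_def P_def by (rule rate_props(3)[OF v0]) (simp add: I00)
    have opt0: "opt_awake p I0 \<le> y"
    proof -
      define Sp :: schedule where "Sp = ((\<lambda>_. True), (\<lambda>i s. P * indicator {0..y} s))"
      have wk: "work I0 (fst Sp) 0 = x" unfolding work_def Sp_def using I00 T1s by simp
      have intp: "integral {0..y} (\<lambda>s. P * indicator {0..y} s) = P * y"
      proof -
        have "integral {0..y} (\<lambda>s. P * indicator {0..y} s) = integral {0..y} (\<lambda>s. P)"
          by (rule integral_cong) simp
        also have "\<dots> = P * y" using ypos by (simp add: content_real)
        finally show ?thesis .
      qed
      have wex: "work I0 (fst Sp) 0 \<le> integral {arr (I0 ! 0)..y} (snd Sp 0)"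
      proof -
        have sp: "snd Sp 0 = (\<lambda>s. P * indicator {0..y} s)" unfolding Sp_def by simp
        have ar: "arr (I0 ! 0) = 0" using I00 T1s by simp
        show ?thesis unfolding sp ar wk intp x_def by simp
      qed
      have vp: "valid_schedule p I0 Sp"
        unfolding valid_schedule_def
      proof (intro conjI allI impI)
        fix i assume i: "i < length I0"
        then have i0: "i = 0" using I00 by simp
        show "snd Sp i \<in> borel_measurable borel" unfolding Sp_def by simp
        show "0 \<le> snd Sp i s" for s unfolding Sp_def using P2 by simp
        show "snd Sp i s = 0" if "s < arr (I0 ! i)" for s
          using that unfolding Sp_def i0 I00 T1s by simp
        show "snd Sp i s \<le> 1" if "\<not> fst Sp i" for s using that unfolding Sp_def by simp
        show "\<exists>T. work I0 (fst Sp) i \<le> integral {arr (I0 ! i)..T} (snd Sp i)"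
          using wex i0 by blast
      next
        fix s show "(\<Sum>i<length I0. snd Sp i s) \<le> real p"
          unfolding Sp_def I00 P_def by (simp add: indicator_def)
      qed
      have "completion I0 Sp 0 \<le> y"
        by (rule compl_le[OF _ wex]) (use I00 T1s ypos in simp)
      then have "awake I0 Sp \<le> y - 0"
        by (intro awake_le) (use ypos in \<open>auto simp: I00 T1s\<close>)
      then show ?thesis using opt_le[OF vp] by simp
    qed
    have ropt0: "r * opt_awake p I0 \<le> r * y"
      by (rule mult_left_mono[OF opt0]) (use r1 in simp)
    have cover0: "awake I0 S0 \<ge> completion I0 S0 0"
    proof -
      have c0: "0 \<le> completion I0 S0 0" using compl_ge_arr[OF ok0 v0, of 0] by (simp add: I00 T1s)
      have "{0..<completion I0 S0 0} \<subseteq> (\<Union>i<length I0. {arr (I0 ! i)..<completion I0 S0 i})"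
        by (auto simp: I00 T1s)
      from awake_ge[OF this c0] show ?thesis by simp
    qed
    show ?thesis
    proof (cases "fst S0 0")
      case False
      have "1 \<le> completion I0 S0 0"
      proof (rule compl_ge[OF ok0 v0])
        show "0 < length I0" by (simp add: I00)
        fix T assume T: "arr (I0 ! 0) \<le> T" "work I0 (fst S0) 0 \<le> integral {arr (I0 ! 0)..T} (snd S0 0)"
        have w: "work I0 (fst S0) 0 = 1" unfolding work_def using False I00 T1s by simp
        have "integral {0..T} f \<le> 1 * (T - 0)"
          by (rule int_le_const[OF fint]) (use T rate_props(5)[OF v0, of 0] False in \<open>simp_all add: I00 T1s f_def\<close>)
        then show "1 \<le> T" using T w by (simp add: I00 T1s f_def)
      qed
      then have "r * opt_awake p I0 \<le> awake I0 (A I0)"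
        using ropt0 ry cover0 unfolding S0_def by linarith
      then show ?thesis using ok0 I0_def by blast
    next
      case True
      have w0: "work I0 (fst S0) 0 = x" unfolding work_def using True I00 T1s by simp
      define Z where "Z = {t. 0 < integral {0..t} f}"
      have Zne: "Z \<noteq> {}"
      proof -
        obtain T where "x \<le> integral {0..T} f"
          using rate_props(6)[OF v0, of 0] w0 by (auto simp: I00 T1s f_def)
        then have "T \<in> Z" unfolding Z_def using x1 by simp
        then show ?thesis by blast
      qed
      have Zbdd: "bdd_below Z"
      proof (rule bdd_belowI[where m=0])
        fix t assume "t \<in> Z"
        then show "0 \<le> t" unfolding Z_def by (cases "t < 0") auto
      qed
      define s where "s = Inf Z"
      define \<eta>' where "\<eta>' = \<eta> / 2"
      have e': "0 < \<eta>'" unfolding \<eta>'_def using eta by simp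
      obtain t where t: "t \<in> Z" "t < s + \<eta>'"
        using cInf_lessD[OF Zne, of "s + \<eta>'"] e' unfolding s_def by auto
      define s1 where "s1 = max 0 (s - \<eta>')"
      have s10: "0 \<le> s1" unfolding s1_def by simp
      have int_s1: "integral {0..s1} f = 0"
      proof (cases "s - \<eta>' \<le> 0")
        case True
        then have "s1 = 0" unfolding s1_def by simp
        have "integral {0..s1} f \<le> P * (s1 - 0)" by (rule int_le_const[OF fint fle]) (simp add: s10)
        then show ?thesis using int_nonneg[OF fint fnn, of 0 s1] \<open>s1 = 0\<close> by simp
      next
        case False
        then have "s1 = s - \<eta>'" unfolding s1_def by simp
        have "s1 \<notin> Z"
        proof
          assume "s1 \<in> Z"
          then have "s \<le> s1" unfolding s_def by (rule cInf_lower[OF _ Zbdd])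
          then show False using \<open>s1 = s - \<eta>'\<close> e' by simp
        qed
        then show ?thesis using int_nonneg[OF fint fnn, of 0 s1] unfolding Z_def by simp
      qed
      have ts1: "s1 < t"
      proof (rule ccontr)
        assume "\<not> s1 < t"
        then have "integral {0..t} f \<le> integral {0..s1} f"
          by (intro int_mono[OF fint fnn]) auto
        then show False using t(1) int_s1 unfolding Z_def by simp
      qed
      have ts2: "t < s1 + \<eta>" using t(2) unfolding s1_def \<eta>'_def by simp
      have fbound: "integral {0..T} f \<le> P * (T - s1)" if "s1 \<le> T" for T
      proof -
        have "integral {0..T} f = integral {0..s1} f + integral {s1..T} f"
          by (rule int_split[OF fint s10 that])
        also have "\<dots> \<le> 0 + P * (T - s1)"
          using int_s1 int_le_const[OF fint fle that] by simp
        finally show ?thesis by simp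
      qed
      show ?thesis
      proof (cases "(r - 1) * y \<le> s1")
        case True
        have "s1 + y \<le> completion I0 S0 0"
        proof (rule compl_ge[OF ok0 v0])
          show "0 < length I0" by (simp add: I00)
          fix T assume T: "arr (I0 ! 0) \<le> T" "work I0 (fst S0) 0 \<le> integral {arr (I0 ! 0)..T} (snd S0 0)"
          then have T': "x \<le> integral {0..T} f" using w0 by (simp add: I00 T1s f_def)
          have "s1 \<le> T"
          proof (rule ccontr)
            assume "\<not> s1 \<le> T"
            then have "integral {0..T} f \<le> integral {0..s1} f"
              by (intro int_mono[OF fint fnn]) auto
            then show False using T' int_s1 x1 by simp
          qed
          then have "P * y \<le> P * (T - s1)" using fbound T' unfolding x_def by fastforce
          then have "y \<le> T - s1" using P2 by simp
          then show "s1 + y \<le> T" by simp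
        qed
        moreover have "r * y = (r - 1) * y + y" by (simp add: algebra_simps)
        ultimately have "r * y \<le> awake I0 S0" using True cover0 by linarith
        then have "r * opt_awake p I0 \<le> awake I0 (A I0)"
          using ropt0 unfolding S0_def by linarith
        then show ?thesis using ok0 I0_def by blast
      next
        case False
        define a where "a = s1 + \<eta>"
        define l where "l = 1 - a"
        have a0: "0 \<le> a" "t < a" "a < 1" "0 < l" "a < r"
          unfolding a_def l_def using s10 ts2 False eta r1 by auto
        define T2 where "T2 = (l, P * l, a)"
        have T2s: "arr T2 = a" "ser T2 = l" "par_work T2 = P * l"
          unfolding T2_def arr_def ser_def par_work_def by simp_all
        define I1 where "I1 = T1 # replicate (p - 1) T2"
        have pS: "p = Suc (p - 1)" using p2 by simp
        have len1: "length I1 = p" unfolding I1_def using p2 by simp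
        have I10: "I1 ! 0 = T1" unfolding I1_def by simp
        have I1i: "I1 ! i = T2" if "0 < i" "i < p" for i
          unfolding I1_def by (rule nth_I1) (use that pS in auto)
        have arrI1: "0 \<le> arr (I1 ! i)" if "i < p" for i
          using that I10 I1i[of i] T1s T2s a0 by (cases "i = 0") auto
        have vt2: "valid_task p T2" unfolding valid_task_def T2s
          using a0 P2 P_def by (auto simp: mult_le_cancel_right1)
        have ok1: "instance_ok p I1" unfolding instance_ok_def I1_def
          using vt1 vt2 a0 T1s T2s by (auto simp: sorted_replicate)
        have opt1: "opt_awake p I1 \<le> 1"
        proof -
          define Sq :: schedule where
            "Sq = ((\<lambda>_. False), (\<lambda>i s. if i = 0 then indicator {0..1} s else indicator {a..1} s))"
          have i01: "integral {0..1} (indicator {0..1::real}) = (1::real)"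
          proof -
            have "integral {0..1} (indicator {0..1::real}) = integral {0..1::real} (\<lambda>s. 1::real)"
              by (rule integral_cong) simp
            then show ?thesis by simp
          qed
          have ia1: "integral {a..1} (indicator {a..1::real}) = (1 - a::real)"
          proof -
            have "integral {a..1} (indicator {a..1::real}) = integral {a..1::real} (\<lambda>s. 1::real)"
              by (rule integral_cong) simp
            then show ?thesis using a0 by (simp add: content_real)
          qed
          have wk: "work I1 (fst Sq) i = (if i = 0 then 1 else l)" if "i < p" for i
            using that I10 I1i T1s T2s unfolding work_def Sq_def by auto
          have vq: "valid_schedule p I1 Sq"
            unfolding valid_schedule_def
          proof (intro conjI allI impI)
            fix i assume i: "i < length I1"
            show "snd Sq i \<in> borel_measurable borel" unfolding Sq_def by simp
            show "0 \<le> snd Sq i s" for s unfolding Sq_def by simp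
            show "snd Sq i s = 0" if "s < arr (I1 ! i)" for s
              using that i len1 I10 I1i T1s T2s unfolding Sq_def by (cases "i = 0") auto
            show "snd Sq i s \<le> 1" if "\<not> fst Sq i" for s unfolding Sq_def by (simp add: indicator_def)
            show "\<exists>T. work I1 (fst Sq) i \<le> integral {arr (I1 ! i)..T} (snd Sq i)"
            proof (rule exI[of _ 1], cases "i = 0")
              case True then show "work I1 (fst Sq) i \<le> integral {arr (I1 ! i)..1} (snd Sq i)"
                using wk[of i] i len1 I10 T1s i01 unfolding Sq_def by simp
            next
              case False then show "work I1 (fst Sq) i \<le> integral {arr (I1 ! i)..1} (snd Sq i)"
                using wk[of i] i len1 I1i[of i] T2s ia1 unfolding Sq_def l_def by simp
            qed
          next
            fix s
            have "(\<Sum>i<length I1. snd Sq i s) \<le> (\<Sum>i<length I1. 1)"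
              by (rule sum_mono) (simp add: Sq_def indicator_def)
            then show "(\<Sum>i<length I1. snd Sq i s) \<le> real p" using len1 by simp
          qed
          have cl: "completion I1 Sq i \<le> 1" if "i < length I1" for i
          proof (rule compl_le)
            show "arr (I1 ! i) \<le> 1" using that len1 I10 I1i T1s T2s a0 by (cases "i = 0") auto
            show "work I1 (fst Sq) i \<le> integral {arr (I1 ! i)..1} (snd Sq i)"
              using vq that len1 I10 I1i T1s T2s wk[of i] i01 ia1 unfolding Sq_def l_def
              by (cases "i = 0") auto
          qed
          have "awake I1 Sq \<le> 1 - 0"
            by (rule awake_le[OF _ cl]) (use arrI1 len1 in auto)
          then show ?thesis using opt_le[OF vq] by simp
        qed
        define S1 where "S1 = A I1"
        have v1: "valid_schedule p I1 S1" unfolding S1_def by (rule val[OF ok1])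
        define g where "g = snd S1"
        have gint: "\<And>u v. g i integrable_on {u..v}" if "i < p" for i
          unfolding g_def by (rule rate_int[OF v1]) (simp add: len1 that)
        have gnn: "\<And>s. 0 \<le> g i s" if "i < p" for i
          unfolding g_def by (rule rate_props(2)[OF v1]) (simp add: len1 that)
        have gle: "\<And>s. g i s \<le> P" if "i < p" for i
          unfolding g_def P_def by (rule rate_props(3)[OF v1]) (simp add: len1 that)
        have p0: "0 < p" using p2 by simp
        have tw0: "takeWhile (\<lambda>x. arr x \<le> t) I0 = [T1]"
          unfolding I0_def using T1s ts1 s10 by simp
        have tw1: "takeWhile (\<lambda>x. arr x \<le> t) I1 = [T1]"
          unfolding I1_def using T1s T2s ts1 s10 a0 by simp
        have on: "\<forall>i < length (takeWhile (\<lambda>x. arr x \<le> t) I0).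
           (AE s in lborel. s \<le> t \<longrightarrow> snd (A I0) i s = snd (A I1) i s)
         \<and> (0 < integral {arr (I0 ! i)..t} (snd (A I0) i) \<longrightarrow> fst (A I0) i = fst (A I1) i)"
          by (rule onl[OF ok0 ok1]) (simp only: tw0 tw1)
        have l0: "0 < length (takeWhile (\<lambda>x. arr x \<le> t) I0)" unfolding tw0 by simp
        have on0: "(AE s in lborel. s \<le> t \<longrightarrow> snd (A I0) 0 s = snd (A I1) 0 s)"
          and on1: "0 < integral {arr (I0 ! 0)..t} (snd (A I0) 0) \<longrightarrow> fst (A I0) 0 = fst (A I1) 0"
          using spec[OF on, of 0] l0 by blast+
        have par1: "fst S1 0"
        proof -
          have "0 < integral {0..t} f" using t(1) unfolding Z_def by simp
          then have "0 < integral {arr (I0 ! 0)..t} (snd (A I0) 0)"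
            unfolding f_def S0_def using I00 T1s by simp
          then have "fst (A I0) 0 = fst (A I1) 0" using on1 by blast
          then show ?thesis using True unfolding S0_def S1_def by simp
        qed
        have inteq: "integral {0..t} (g 0) = integral {0..t} f"
        proof -
          obtain N where N0: "{s \<in> space lborel. \<not> (s \<le> t \<longrightarrow> snd (A I0) 0 s = snd (A I1) 0 s)} \<subseteq> N"
            "emeasure lborel N = 0" "N \<in> sets lborel"
            by (rule AE_E[OF on0])
          have N: "{s. \<not> (s \<le> t \<longrightarrow> snd (A I0) 0 s = snd (A I1) 0 s)} \<subseteq> N" "N \<in> null_sets lborel"
            using N0 by (simp_all add: null_setsI)
          have "negligible N" unfolding negligible_iff_null_sets
            using null_sets_completionI[OF N(2)] by simp
          then show ?thesis
            by (rule integral_spike) (use N(1) in \<open>auto simp: g_def f_def S1_def S0_def\<close>)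
        qed
        have W: "integral {0..a} (g 0) \<le> P * \<eta>"
        proof -
          have "integral {0..a} (g 0) = integral {0..t} (g 0) + integral {t..a} (g 0)"
            by (rule int_split[OF gint[OF p0]]) (use ts1 s10 a0 in auto)
          also have "\<dots> \<le> P * (t - s1) + P * (a - t)"
            using inteq fbound[of t] ts1 int_le_const[OF gint[OF p0] gle[OF p0], of t a] a0 by simp
          also have "\<dots> = P * \<eta>" unfolding a_def by (simp add: algebra_simps)
          finally show ?thesis .
        qed
        have w10: "work I1 (fst S1) 0 = x" unfolding work_def using par1 I10 T1s by simp
        have Pe: "P * \<eta> < x" unfolding x_def using P2 eta dpos by simp
        have C1a: "a \<le> completion I1 S1 0"
        proof (rule compl_ge[OF ok1 v1])
          show "0 < length I1" using len1 p0 by simp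
          fix T assume T: "arr (I1 ! 0) \<le> T" "work I1 (fst S1) 0 \<le> integral {arr (I1 ! 0)..T} (snd S1 0)"
          then have T': "x \<le> integral {0..T} (g 0)" using w10 by (simp add: I10 T1s g_def)
          show "a \<le> T"
          proof (rule ccontr)
            assume "\<not> a \<le> T"
            then have "integral {0..T} (g 0) \<le> integral {0..a} (g 0)"
              by (intro int_mono[OF gint[OF p0] gnn[OF p0]]) auto
            then show False using T' W Pe by simp
          qed
        qed
        have key: "\<exists>i<p. r \<le> completion I1 S1 i"
        proof (rule ccontr)
          assume H: "\<not> (\<exists>i<p. r \<le> completion I1 S1 i)"
          have wi: "work I1 (fst S1) i \<le> integral {arr (I1 ! i)..r} (g i)" if i: "i < p" for i
          proof -
            have "completion I1 S1 i < r" using H i by auto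
            then obtain T where T: "arr (I1 ! i) \<le> T" "T < r"
              "work I1 (fst S1) i \<le> integral {arr (I1 ! i)..T} (snd S1 i)"
              using compl_lt[OF ok1 v1, of i r] i len1 by auto
            have "integral {arr (I1 ! i)..T} (g i) \<le> integral {arr (I1 ! i)..r} (g i)"
              by (rule int_mono[OF gint[OF i] gnn[OF i]]) (use T in auto)
            then show ?thesis using T(3) unfolding g_def by simp
          qed
          have e0: "x \<le> integral {0..a} (g 0) + integral {a..r} (g 0)"
          proof -
            have "integral {0..r} (g 0) = integral {0..a} (g 0) + integral {a..r} (g 0)"
              by (rule int_split[OF gint[OF p0]]) (use a0 in auto)
            then show ?thesis using wi[OF p0] w10 I10 T1s by simp
          qed
          have ei: "l \<le> integral {a..r} (g (Suc j))" if j: "j < p - 1" for j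
          proof -
            have j1: "Suc j < p" using j by simp
            have "l \<le> work I1 (fst S1) (Suc j)"
              unfolding work_def using I1i[OF _ j1] T2s a0 P2
              by (auto simp: mult_le_cancel_right1)
            then show ?thesis using wi[OF j1] I1i[OF _ j1] T2s by simp
          qed
          have "(\<Sum>j<p - 1. l) \<le> (\<Sum>j<p - 1. integral {a..r} (g (Suc j)))"
            by (rule sum_mono) (use ei in auto)
          then have e1: "(P - 1) * l \<le> (\<Sum>j<p - 1. integral {a..r} (g (Suc j)))"
            unfolding P_def using p2 by (simp add: of_nat_diff)
          have "(\<Sum>i<p. integral {a..r} (g i)) = integral {a..r} (\<lambda>s. \<Sum>i<p. g i s)"
            by (rule integral_sum[symmetric]) (use gint in auto)
          also have "\<dots> \<le> P * (r - a)"
          proof (rule int_le_const)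
            show "(\<lambda>s. \<Sum>i<p. g i s) integrable_on {a..r}"
              by (rule integrable_sum) (use gint in auto)
            show "(\<Sum>i<p. g i s) \<le> P" for s
              using v1 len1 unfolding valid_schedule_def g_def P_def by auto
            show "a \<le> r" using a0 by simp
          qed
          finally have e2: "(\<Sum>i<p. integral {a..r} (g i)) \<le> P * (r - a)" .
          have e3: "(\<Sum>i<p. integral {a..r} (g i)) = integral {a..r} (g 0) + (\<Sum>j<p - 1. integral {a..r} (g (Suc j)))"
            by (subst pS) (simp only: sum.lessThan_Suc_shift)
          have main: "x + (P - 1) * l \<le> P * \<eta> + P * (r - a)"
            using e0 e1 e2 e3 W by linarith
          have Pr: "P * r = P * \<phi> - 1" unfolding r_def using P2 by (simp add: field_simps)
          have Pd: "P * \<eta> < P * \<delta>" using P2 eta by simp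
          have "x + (P - 1) * l = P * y + P - P * a - 1 + a" unfolding x_def l_def by (simp add: algebra_simps)
          moreover have "P * \<eta> + P * (r - a) = P * \<eta> + P * \<phi> - 1 - P * a" using Pr by (simp add: algebra_simps)
          moreover have "P * \<delta> = P * y - P * \<phi> + P" unfolding \<delta>_def by (simp add: algebra_simps)
          ultimately show False using main Pd a0 by linarith
        qed
        then obtain i where i: "i < p" "r \<le> completion I1 S1 i" by blast
        have cover: "{0..<completion I1 S1 i} \<subseteq> (\<Union>i<length I1. {arr (I1 ! i)..<completion I1 S1 i})"
        proof
          fix z assume z: "z \<in> {0..<completion I1 S1 i}"
          show "z \<in> (\<Union>i<length I1. {arr (I1 ! i)..<completion I1 S1 i})"
          proof (cases "z < completion I1 S1 0")
            case True
            then show ?thesis using z len1 p0 I10 T1s by force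
          next
            case False
            have "0 < i"
            proof (rule ccontr)
              assume "\<not> 0 < i"
              then have "i = 0" by simp
              then show False using z False by simp
            qed
            then have "arr (I1 ! i) = a" using I1i[of i] i T2s by simp
            then show ?thesis using z False C1a len1 i by force
          qed
        qed
        have "completion I1 S1 i - 0 \<le> awake I1 S1"
          by (rule awake_ge[OF cover]) (use i r1 in simp)
        moreover have "r * opt_awake p I1 \<le> r * 1"
          by (rule mult_left_mono[OF opt1]) (use r1 in simp)
        ultimately have "r * opt_awake p I1 \<le> awake I1 (A I1)"
          using i unfolding S1_def by simp
        then show ?thesis using ok1 I1_def by blast
      qed
    qed
  qed
  then show ?thesis unfolding r_def \<phi>_def P_def by simp
qed

end
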